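(* Let $\mathbf{x} = B\mathbf{z}+\mathbf{g}$, where $B\in\mathbb{R}^{k\times k}$, $\mathbf{z}=(z_1,\dots,z_k)$ has mutually independent mean zero components with covariance $\mathrm{diag}(\mathbf{a})$, and $\mathbf{g}\sim N(\mathbf{0},\Sigma)$ is independent of $\mathbf{z}$; let $P$ be the law of $\mathbf{x}$ and $S=\mathrm{cov}(\mathbf{x}) = B\,\mathrm{diag}(\mathbf{a})B^T+\Sigma$. Let $f(\mathbf{u}\mid P)$ be either $$f(\mathbf{u}\mid P) = \log\mathbb{E}\exp(i\mathbf{u}^T\mathbf{x}) + \log\mathbb{E}\exp(-i\mathbf{u}^T\mathbf{x}) + \mathbf{u}^TS\mathbf{u}$$ or $$f(\mathbf{u}\mid P) = \log\mathbb{E}\exp(\mathbf{u}^T\mathbf{x}) - \tfrac12\mathbf{u}^TS\mathbf{u}.$$ Then at each $\mathbf{u}\in\mathbb{R}^k$ where $f$ is well-defined and twice differentiable, $\nabla^2 f(\mathbf{u}\mid P) = BD_{\mathbf{u}}B^T$ for some diagonal matrix $D_{\mathbf{u}}$ (which may differ between the two contrast functions).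
   Context: $i$ denotes the imaginary unit; $\mathrm{diag}(\mathbf{a})$ is the diagonal matrix with diagonal $\mathbf{a}$. *)

theory Defs
  imports "HOL-Probability.Probability"
begin

definition diag_mat :: "real^'n \<Rightarrow> real^'n^'n" where
  "diag_mat a = (\<chi> i j. if i = j then a $ i else 0)"

text \<open>g is a centred Gaussian vector N(0,Sigma) (possibly degenerate): Sigma is symmetric positive
  semidefinite and every linear functional v.g is N(0, v' Sigma v), a point mass at 0 if the
  variance vanishes.\<close>
definition gaussian_vec :: "'a measure \<Rightarrow> ('a \<Rightarrow> real^'n) \<Rightarrow> real^'n^'n \<Rightarrow> bool" where
  "gaussian_vec M g Sig \<longleftrightarrow> g \<in> borel_measurable M \<and> transpose Sig = Sig \<and>
     (\<forall>v. v \<bullet> (Sig *v v) \<ge> 0 \<and>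
        distr M borel (\<lambda>\<omega>. v \<bullet> g \<omega>) =
          (if v \<bullet> (Sig *v v) = 0 then return borel 0
           else density lborel (normal_density 0 (sqrt (v \<bullet> (Sig *v v))))))"

text \<open>H is the Hessian of f at u, where f is well-defined (predicate W) and twice differentiable
  at u: on an open neighbourhood U of u, f is well-defined and differentiable with gradient Df,
  and each component of Df is differentiable at u; H i j is the i-th partial of the j-th
  component of the gradient.\<close>
definition hessian_at :: "(real^'n \<Rightarrow> bool) \<Rightarrow> (real^'n \<Rightarrow> 'b::real_normed_vector)
    \<Rightarrow> real^'n \<Rightarrow> 'b^'n^'n \<Rightarrow> bool" where
  "hessian_at W f u H \<longleftrightarrow>
    (\<exists>U. open U \<and> u \<in> U \<and> (\<forall>v\<in>U. W v) \<and>
      (\<exists>Df :: real^'n \<Rightarrow> 'b^'n.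
        (\<forall>v\<in>U. (f has_derivative (\<lambda>h. \<Sum>j\<in>UNIV. (h $ j) *\<^sub>R (Df v $ j))) (at v)) \<and>
        (\<forall>j. ((\<lambda>v. Df v $ j) has_derivative (\<lambda>h. \<Sum>i\<in>UNIV. (h $ i) *\<^sub>R (H $ i $ j))) (at u))))"

text \<open>First contrast: log E exp(i u'x) + log E exp(-i u'x) + u'Su (principal complex logarithm),
  well-defined where both expectations are nonzero.\<close>
definition cf_char :: "'a measure \<Rightarrow> ('a \<Rightarrow> real^'n) \<Rightarrow> real^'n^'n \<Rightarrow> real^'n \<Rightarrow> complex" where
  "cf_char M x S u =
     Ln (\<integral>\<omega>. exp (\<i> * complex_of_real (u \<bullet> x \<omega>)) \<partial>M)
   + Ln (\<integral>\<omega>. exp (- (\<i> * complex_of_real (u \<bullet> x \<omega>))) \<partial>M)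
   + complex_of_real (u \<bullet> (S *v u))"

definition wd_char :: "'a measure \<Rightarrow> ('a \<Rightarrow> real^'n) \<Rightarrow> real^'n \<Rightarrow> bool" where
  "wd_char M x u \<longleftrightarrow>
     (\<integral>\<omega>. exp (\<i> * complex_of_real (u \<bullet> x \<omega>)) \<partial>M) \<noteq> 0 \<and>
     (\<integral>\<omega>. exp (- (\<i> * complex_of_real (u \<bullet> x \<omega>))) \<partial>M) \<noteq> 0"

definition cf_cgf :: "'a measure \<Rightarrow> ('a \<Rightarrow> real^'n) \<Rightarrow> real^'n^'n \<Rightarrow> real^'n \<Rightarrow> real" where
  "cf_cgf M x S u = ln (\<integral>\<omega>. exp (u \<bullet> x \<omega>) \<partial>M) - 1/2 * (u \<bullet> (S *v u))"

definition wd_cgf :: "'a measure \<Rightarrow> ('a \<Rightarrow> real^'n) \<Rightarrow> real^'n \<Rightarrow> bool" where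
  "wd_cgf M x u \<longleftrightarrow> integrable M (\<lambda>\<omega>. exp (u \<bullet> x \<omega>))"

end

theory Submission
  imports Defs
begin


definition wj :: "real^'k^'k \<Rightarrow> 'k \<Rightarrow> real^'k \<Rightarrow> real" where
  "wj B j v = (\<Sum>i\<in>UNIV. B$i$j * v$i)"

lemma wj_has_derivative: "(wj B j has_derivative wj B j) (at v)"
proof -
  have "bounded_linear (wj B j)"
    unfolding wj_def by (intro bounded_linear_sum bounded_linear_const_mult bounded_linear_vec_nth)
  then show ?thesis by (rule bounded_linear_imp_has_derivative)
qed

lemma wj_linear: "wj B j (v + c *\<^sub>R h) = wj B j v + c * wj B j h"
  unfolding wj_def by (simp add: sum.distrib sum_distrib_left algebra_simps)

lemma wj_axis: "wj B j (axis l 1) = B$l$j"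
  unfolding wj_def axis_def by (simp add: if_distrib cong: if_cong)

lemma wj_zero_col: "(\<forall>i. B$i$j = 0) \<Longrightarrow> wj B j v = 0"
  unfolding wj_def by simp

lemma sum_axis_real: "(\<Sum>j\<in>UNIV. (axis l (1::real)) $ j * c j) = c l"
proof -
  have "\<And>j. (axis l (1::real)) $ j * c j = (if l = j then c j else 0)" by (simp add: axis_def)
  then show ?thesis by simp
qed

lemma sum_axis_real2: "(\<Sum>j\<in>UNIV. c j * (axis l (1::real)) $ j) = c l"
  using sum_axis_real[of l c] by (simp add: mult.commute)

lemma hess_sep:
  fixes f :: "real^'k \<Rightarrow> real" and B H :: "real^'k^'k" and Df :: "real^'k \<Rightarrow> real^'k"
  assumes U: "open U" "u \<in> U"
    and feq: "\<And>v. v \<in> U \<Longrightarrow> f v = (\<Sum>j\<in>UNIV. G j (wj B j v))"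
    and dG: "\<And>j v. v \<in> U \<Longrightarrow> (\<exists>i. B$i$j \<noteq> 0) \<Longrightarrow> (G j has_real_derivative G1 j (wj B j v)) (at (wj B j v))"
    and d2G: "\<And>j. (\<exists>i. B$i$j \<noteq> 0) \<Longrightarrow> (G1 j has_real_derivative G2 j) (at (wj B j u))"
    and Df: "\<And>v. v \<in> U \<Longrightarrow> (f has_derivative (\<lambda>h. \<Sum>j\<in>UNIV. (h $ j) *\<^sub>R (Df v $ j))) (at v)"
    and HD: "\<And>j. ((\<lambda>v. Df v $ j) has_derivative (\<lambda>h. \<Sum>i\<in>UNIV. (h $ i) *\<^sub>R (H $ i $ j))) (at u)"
  shows "H = B ** diag_mat (\<chi> j. if (\<exists>i. B$i$j \<noteq> 0) then G2 j else 0) ** transpose B"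
proof -
  define G1' where "G1' j t = (if (\<exists>i. B$i$j \<noteq> 0) then G1 j t else 0)" for j t
  define G2' where "G2' j = (if (\<exists>i. B$i$j \<noteq> 0) then G2 j else 0)" for j
  have dterm: "((\<lambda>v. G j (wj B j v)) has_derivative (\<lambda>h. G1' j (wj B j v) * wj B j h)) (at v)"
    if "v \<in> U" for j v
  proof (cases "\<exists>i. B$i$j \<noteq> 0")
    case True
    have "((G j) \<circ> (wj B j) has_derivative (\<lambda>h. G1 j (wj B j v) * h) \<circ> wj B j) (at v)"
      by (rule diff_chain_at[OF wj_has_derivative]) (use dG[OF that True] in \<open>simp add: has_field_derivative_def\<close>)
    then show ?thesis using True by (simp add: G1'_def o_def)
  next
    case False
    then have "\<And>v. wj B j v = 0" by (intro wj_zero_col) auto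
    then show ?thesis using False by (simp add: G1'_def)
  qed
  have df2: "(f has_derivative (\<lambda>h. \<Sum>j\<in>UNIV. G1' j (wj B j v) * wj B j h)) (at v)" if "v \<in> U" for v
  proof -
    have "((\<lambda>v. \<Sum>j\<in>UNIV. G j (wj B j v)) has_derivative (\<lambda>h. \<Sum>j\<in>UNIV. G1' j (wj B j v) * wj B j h)) (at v)"
      by (intro has_derivative_sum dterm that)
    then show ?thesis
      by (rule has_derivative_transform_within_open[OF _ U(1) that]) (simp add: feq)
  qed
  have Dfeq: "Df v $ l = (\<Sum>j\<in>UNIV. B$l$j * G1' j (wj B j v))" if "v \<in> U" for v l
  proof -
    have "(\<lambda>h. \<Sum>j\<in>UNIV. (h $ j) *\<^sub>R (Df v $ j)) = (\<lambda>h. \<Sum>j\<in>UNIV. G1' j (wj B j v) * wj B j h)"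
      by (rule has_derivative_unique[OF Df[OF that] df2[OF that]])
    then have "(\<Sum>j\<in>UNIV. (axis l 1 $ j) *\<^sub>R (Df v $ j)) = (\<Sum>j\<in>UNIV. G1' j (wj B j v) * wj B j (axis l 1))"
      by metis
    then show ?thesis by (simp add: sum_axis_real sum_axis_real2 wj_axis mult.commute)
  qed
  have d1term: "((\<lambda>v. G1' j (wj B j v)) has_derivative (\<lambda>h. G2' j * wj B j h)) (at u)" for j
  proof (cases "\<exists>i. B$i$j \<noteq> 0")
    case True
    have "((G1 j) \<circ> (wj B j) has_derivative (\<lambda>h. G2 j * h) \<circ> wj B j) (at u)"
      by (rule diff_chain_at[OF wj_has_derivative]) (use d2G[OF True] in \<open>simp add: has_field_derivative_def\<close>)
    then show ?thesis using True by (simp add: G1'_def G2'_def o_def)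
  next
    case False
    then show ?thesis by (simp add: G1'_def G2'_def)
  qed
  have HDl: "((\<lambda>v. Df v $ l) has_derivative (\<lambda>h. \<Sum>j\<in>UNIV. B$l$j * (G2' j * wj B j h))) (at u)" for l
  proof -
    have "((\<lambda>v. \<Sum>j\<in>UNIV. B$l$j * G1' j (wj B j v)) has_derivative (\<lambda>h. \<Sum>j\<in>UNIV. B$l$j * (G2' j * wj B j h))) (at u)"
      by (intro has_derivative_sum has_derivative_mult_right d1term)
    then show ?thesis
      by (rule has_derivative_transform_within_open[OF _ U]) (simp add: Dfeq)
  qed
  show ?thesis
    unfolding vec_eq_iff
  proof (intro allI)
    fix m l
    have "(\<lambda>h. \<Sum>i\<in>UNIV. (h $ i) *\<^sub>R (H $ i $ l)) = (\<lambda>h. \<Sum>j\<in>UNIV. B$l$j * (G2' j * wj B j h))"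
      by (rule has_derivative_unique[OF HD HDl])
    then have "(\<Sum>i\<in>UNIV. (axis m 1 $ i) *\<^sub>R (H $ i $ l)) = (\<Sum>j\<in>UNIV. B$l$j * (G2' j * wj B j (axis m 1)))"
      by metis
    then have "H $ m $ l = (\<Sum>j\<in>UNIV. B$l$j * (G2' j * B$m$j))"
      by (simp add: sum_axis_real sum_axis_real2 wj_axis)
    also have "\<dots> = (B ** diag_mat (\<chi> j. G2' j) ** transpose B) $ m $ l"
      by (simp add: matrix_matrix_mult_def diag_mat_def transpose_def if_distrib sum_distrib_left
          sum_distrib_right mult_ac cong: if_cong)
    finally show "H $ m $ l = (B ** diag_mat (\<chi> j. if (\<exists>i. B$i$j \<noteq> 0) then G2 j else 0) ** transpose B) $ m $ l"
      by (simp add: G2'_def)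
  qed
qed



lemma mvt_bound:
  fixes f f' :: "real \<Rightarrow> real"
  assumes d: "\<And>s. s \<in> ball t e \<Longrightarrow> (f has_real_derivative f' s) (at s)"
    and b: "\<And>s. s \<in> ball t e \<Longrightarrow> \<bar>f' s\<bar> \<le> C"
    and s: "s \<in> ball t e"
  shows "\<bar>f s - f t\<bar> \<le> C * \<bar>s - t\<bar>"
proof -
  have conv: "x \<in> ball t e" if "min s t \<le> x" "x \<le> max s t" for x
    using s that by (auto simp: dist_real_def)
  consider "s < t" | "s = t" | "t < s" by linarith
  then show ?thesis
  proof cases
    case 1
    obtain z where z: "s < z" "z < t" "f t - f s = (t - s) * f' z"
      using MVT2[OF 1, of f f'] d conv 1 by (auto simp: min_def max_def)
    have "z \<in> ball t e" using conv z 1 by auto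
    then have "\<bar>f' z\<bar> \<le> C" by (rule b)
    have "\<bar>f s - f t\<bar> = \<bar>(t - s) * f' z\<bar>" by (metis abs_minus_commute z(3))
    also have "\<dots> = \<bar>f' z\<bar> * \<bar>s - t\<bar>" by (simp add: abs_mult abs_minus_commute mult.commute)
    finally have "\<bar>f s - f t\<bar> = \<bar>f' z\<bar> * \<bar>s - t\<bar>" .
    then show ?thesis using \<open>\<bar>f' z\<bar> \<le> C\<close> by (simp add: mult_right_mono)
  next
    case 2 then show ?thesis by simp
  next
    case 3
    obtain z where z: "t < z" "z < s" "f s - f t = (s - t) * f' z"
      using MVT2[OF 3, of f f'] d conv 3 by (auto simp: min_def max_def)
    have "z \<in> ball t e" using conv z 3 by auto
    then have "\<bar>f' z\<bar> \<le> C" by (rule b)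
    have "\<bar>f s - f t\<bar> = \<bar>f' z\<bar> * \<bar>s - t\<bar>" using z by (simp add: abs_minus_commute abs_mult)
    then show ?thesis using \<open>\<bar>f' z\<bar> \<le> C\<close> by (simp add: mult_right_mono)
  qed
qed

lemma DERIV_integral:
  fixes F F' :: "real \<Rightarrow> 'a \<Rightarrow> real" and g :: "'a \<Rightarrow> real"
  assumes e: "e > 0"
    and dF: "\<And>s \<omega>. s \<in> ball t e \<Longrightarrow> \<omega> \<in> space M \<Longrightarrow> ((\<lambda>s. F s \<omega>) has_real_derivative F' s \<omega>) (at s)"
    and intF: "\<And>s. s \<in> ball t e \<Longrightarrow> integrable M (F s)"
    and mF': "F' t \<in> borel_measurable M"
    and g: "integrable M g"
    and bound: "\<And>s \<omega>. s \<in> ball t e \<Longrightarrow> \<omega> \<in> space M \<Longrightarrow> \<bar>F' s \<omega>\<bar> \<le> g \<omega>"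
  shows "((\<lambda>s. \<integral>\<omega>. F s \<omega> \<partial>M) has_real_derivative (\<integral>\<omega>. F' t \<omega> \<partial>M)) (at t)"
proof -
  have tin: "t \<in> ball t e" using e by simp
  have "((\<lambda>s. \<integral>\<omega>. F s \<omega> \<partial>M) has_real_derivative (\<integral>\<omega>. F' t \<omega> \<partial>M)) (at t within ball t e)"
    unfolding has_field_derivative_iff tendsto_at_iff_sequentially
  proof (intro allI impI)
    fix X :: "nat \<Rightarrow> real" assume X: "\<forall>i. X i \<in> ball t e - {t}" "X \<longlonglongrightarrow> t"
    define s where "s = (\<lambda>i \<omega>. (F (X i) \<omega> - F t \<omega>) / (X i - t))"
    have eq: "((\<lambda>y. ((\<integral>\<omega>. F y \<omega> \<partial>M) - (\<integral>\<omega>. F t \<omega> \<partial>M)) / (y - t)) \<circ> X) i = integral\<^sup>L M (s i)" for i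
    proof -
      have "X i \<in> ball t e" using X by auto
      then show ?thesis
        using intF[OF tin] intF[of "X i"] by (simp add: s_def integral_diff)
    qed
    have "(\<lambda>i. integral\<^sup>L M (s i)) \<longlonglongrightarrow> (\<integral>\<omega>. F' t \<omega> \<partial>M)"
    proof (rule integral_dominated_convergence[where w=g])
      show "F' t \<in> borel_measurable M" by (rule mF')
      show "s i \<in> borel_measurable M" for i
        using X intF[OF tin] intF[of "X i"] unfolding s_def by auto
      show "integrable M g" by (rule g)
      show "AE \<omega> in M. (\<lambda>i. s i \<omega>) \<longlonglongrightarrow> F' t \<omega>"
      proof (rule AE_I2)
        fix \<omega> assume \<omega>: "\<omega> \<in> space M"
        have "((\<lambda>y. (F y \<omega> - F t \<omega>) / (y - t)) \<longlongrightarrow> F' t \<omega>) (at t within UNIV)"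
          using dF[OF tin \<omega>] unfolding has_field_derivative_iff by simp
        then have "((\<lambda>y. (F y \<omega> - F t \<omega>) / (y - t)) \<circ> X) \<longlonglongrightarrow> F' t \<omega>"
          unfolding tendsto_at_iff_sequentially using X by auto
        then show "(\<lambda>i. s i \<omega>) \<longlonglongrightarrow> F' t \<omega>" by (simp add: s_def o_def)
      qed
      show "AE \<omega> in M. norm (s i \<omega>) \<le> g \<omega>" for i
      proof (rule AE_I2)
        fix \<omega> assume \<omega>: "\<omega> \<in> space M"
        have Xi: "X i \<in> ball t e" "X i \<noteq> t" using X by auto
        have "\<bar>F (X i) \<omega> - F t \<omega>\<bar> \<le> g \<omega> * \<bar>X i - t\<bar>"
          by (rule mvt_bound[where f="\<lambda>s. F s \<omega>" and f'="\<lambda>s. F' s \<omega>" and e=e])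
             (use dF \<omega> bound Xi in auto)
        then show "norm (s i \<omega>) \<le> g \<omega>"
          using Xi by (simp add: s_def abs_divide divide_le_eq)
      qed
    qed
    moreover have "((\<lambda>y. ((\<integral>\<omega>. F y \<omega> \<partial>M) - (\<integral>\<omega>. F t \<omega> \<partial>M)) / (y - t)) \<circ> X) = (\<lambda>i. integral\<^sup>L M (s i))"
      by (rule ext) (rule eq)
    ultimately show "((\<lambda>y. ((\<integral>\<omega>. F y \<omega> \<partial>M) - (\<integral>\<omega>. F t \<omega> \<partial>M)) / (y - t)) \<circ> X) \<longlonglongrightarrow> (\<integral>\<omega>. F' t \<omega> \<partial>M)"
      by simp
  qed
  then show ?thesis using at_within_open[OF tin] by simp
qed



lemma normal_density_scale:
  assumes "\<sigma> > 0"
  shows "\<sigma> * normal_density 0 \<sigma> (\<sigma> * s) = normal_density 0 1 s"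
proof -
  have "sqrt (2 * pi * \<sigma>\<^sup>2) = sqrt (2 * pi) * \<sigma>"
    using assms by (simp add: real_sqrt_mult)
  moreover have "(\<sigma> * s)\<^sup>2 / (2 * \<sigma>\<^sup>2) = s\<^sup>2 / 2"
    using assms by (simp add: power_mult_distrib)
  ultimately show ?thesis using assms
    by (simp add: normal_density_def)
qed

lemma gauss_char_1d:
  assumes "\<sigma> > 0"
  shows "(\<integral>y. exp (\<i> * complex_of_real y) \<partial>density lborel (normal_density 0 \<sigma>)) = complex_of_real (exp (- (\<sigma>\<^sup>2) / 2))"
proof -
  have "(\<integral>y. exp (\<i> * complex_of_real y) \<partial>density lborel (normal_density 0 \<sigma>))
      = (\<integral>y. normal_density 0 \<sigma> y *\<^sub>R exp (\<i> * complex_of_real y) \<partial>lborel)"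
    by (subst integral_density) auto
  also have "\<dots> = \<bar>\<sigma>\<bar> *\<^sub>R (\<integral>s. normal_density 0 \<sigma> (0 + \<sigma> * s) *\<^sub>R exp (\<i> * complex_of_real (0 + \<sigma> * s)) \<partial>lborel)"
    using assms by (intro lborel_integral_real_affine) auto
  also have "\<dots> = (\<integral>s. (\<sigma> * normal_density 0 \<sigma> (\<sigma> * s)) *\<^sub>R exp (\<i> * complex_of_real (\<sigma> * s)) \<partial>lborel)"
    using assms by (simp flip: integral_scaleR_right)
  also have "\<dots> = (\<integral>s. std_normal_density s *\<^sub>R exp (\<i> * complex_of_real (\<sigma> * s)) \<partial>lborel)"
    using assms by (simp add: normal_density_scale)
  also have "\<dots> = char std_normal_distribution \<sigma>"
    unfolding char_def by (subst integral_density) auto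
  also have "\<dots> = complex_of_real (exp (- (\<sigma>\<^sup>2) / 2))"
    by (simp add: char_std_normal_distribution)
  finally show ?thesis .
qed

lemma normal_density_exp_shift:
  assumes "\<sigma> > 0"
  shows "normal_density 0 \<sigma> y * exp y = exp (\<sigma>\<^sup>2 / 2) * normal_density (\<sigma>\<^sup>2) \<sigma> y"
proof -
  have "- (y - 0)\<^sup>2 / (2 * \<sigma>\<^sup>2) + y = \<sigma>\<^sup>2 / 2 + (- (y - \<sigma>\<^sup>2)\<^sup>2 / (2 * \<sigma>\<^sup>2))"
    using assms by (simp add: field_simps power2_eq_square)
  then have "exp (- (y - 0)\<^sup>2 / (2 * \<sigma>\<^sup>2)) * exp y = exp (\<sigma>\<^sup>2 / 2) * exp (- (y - \<sigma>\<^sup>2)\<^sup>2 / (2 * \<sigma>\<^sup>2))"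
    by (simp flip: exp_add)
  then show ?thesis unfolding normal_density_def by (simp add: mult_ac)
qed

lemma gauss_mgf_1d:
  assumes "\<sigma> > 0"
  shows "integrable (density lborel (normal_density 0 \<sigma>)) exp"
    and "(\<integral>y. exp y \<partial>density lborel (normal_density 0 \<sigma>)) = exp (\<sigma>\<^sup>2 / 2)"
proof -
  have eq: "(\<lambda>y. normal_density 0 \<sigma> y * exp y) = (\<lambda>y. exp (\<sigma>\<^sup>2 / 2) * normal_density (\<sigma>\<^sup>2) \<sigma> y)"
    using normal_density_exp_shift[OF assms] by auto
  show "integrable (density lborel (normal_density 0 \<sigma>)) exp"
    using integrable_normal_density[of \<sigma> "\<sigma>\<^sup>2"] assms
    by (subst integrable_density) (auto simp: eq)
  show "(\<integral>y. exp y \<partial>density lborel (normal_density 0 \<sigma>)) = exp (\<sigma>\<^sup>2 / 2)"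
    using integral_normal_density[of \<sigma> "\<sigma>\<^sup>2"] assms
    by (subst integral_density) (auto simp: eq)
qed

lemma gauss_vec_distr:
  assumes "gaussian_vec M g Sig"
  shows "(\<lambda>\<omega>. v \<bullet> g \<omega>) \<in> borel_measurable M"
    and "v \<bullet> (Sig *v v) \<ge> 0"
    and "v \<bullet> (Sig *v v) = 0 \<Longrightarrow> distr M borel (\<lambda>\<omega>. v \<bullet> g \<omega>) = return borel 0"
    and "v \<bullet> (Sig *v v) > 0 \<Longrightarrow> distr M borel (\<lambda>\<omega>. v \<bullet> g \<omega>) = density lborel (normal_density 0 (sqrt (v \<bullet> (Sig *v v))))"
  using assms unfolding gaussian_vec_def by auto

lemma gauss_mgf:
  assumes "gaussian_vec M g Sig"
  shows "integrable M (\<lambda>\<omega>. exp (v \<bullet> g \<omega>))"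
    and "(\<integral>\<omega>. exp (v \<bullet> g \<omega>) \<partial>M) = exp (v \<bullet> (Sig *v v) / 2)"
proof -
  note m = gauss_vec_distr(1)[OF assms, of v]
  have I: "integrable M (\<lambda>\<omega>. exp (v \<bullet> g \<omega>)) \<longleftrightarrow> integrable (distr M borel (\<lambda>\<omega>. v \<bullet> g \<omega>)) exp"
    by (subst integrable_distr_eq[OF m]) auto
  have E: "(\<integral>\<omega>. exp (v \<bullet> g \<omega>) \<partial>M) = (\<integral>y. exp y \<partial>distr M borel (\<lambda>\<omega>. v \<bullet> g \<omega>))"
    by (subst integral_distr[OF m]) auto
  have "integrable M (\<lambda>\<omega>. exp (v \<bullet> g \<omega>)) \<and> (\<integral>\<omega>. exp (v \<bullet> g \<omega>) \<partial>M) = exp (v \<bullet> (Sig *v v) / 2)"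
  proof (cases "v \<bullet> (Sig *v v) = 0")
    case True
    then show ?thesis unfolding I E gauss_vec_distr(3)[OF assms True]
      by (simp add: integral_return integrable_iff_bounded nn_integral_return)
  next
    case False
    then have pos: "v \<bullet> (Sig *v v) > 0" using gauss_vec_distr(2)[OF assms, of v] by auto
    then have s: "sqrt (v \<bullet> (Sig *v v)) > 0" "(sqrt (v \<bullet> (Sig *v v)))\<^sup>2 = v \<bullet> (Sig *v v)" by auto
    show ?thesis unfolding I E gauss_vec_distr(4)[OF assms pos]
      using gauss_mgf_1d[OF s(1)] s(2) by simp
  qed
  then show "integrable M (\<lambda>\<omega>. exp (v \<bullet> g \<omega>))"
    and "(\<integral>\<omega>. exp (v \<bullet> g \<omega>) \<partial>M) = exp (v \<bullet> (Sig *v v) / 2)" by auto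
qed

lemma gauss_char:
  assumes "gaussian_vec M g Sig"
  shows "(\<integral>\<omega>. exp (\<i> * complex_of_real (v \<bullet> g \<omega>)) \<partial>M) = complex_of_real (exp (- (v \<bullet> (Sig *v v)) / 2))"
proof -
  note m = gauss_vec_distr(1)[OF assms, of v]
  have E: "(\<integral>\<omega>. exp (\<i> * complex_of_real (v \<bullet> g \<omega>)) \<partial>M) = (\<integral>y. exp (\<i> * complex_of_real y) \<partial>distr M borel (\<lambda>\<omega>. v \<bullet> g \<omega>))"
    by (subst integral_distr[OF m]) auto
  show ?thesis
  proof (cases "v \<bullet> (Sig *v v) = 0")
    case True
    then show ?thesis unfolding E gauss_vec_distr(3)[OF assms True]
      by (simp add: integral_return)
  next
    case False
    then have pos: "v \<bullet> (Sig *v v) > 0" using gauss_vec_distr(2)[OF assms, of v] by auto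
    then have s: "sqrt (v \<bullet> (Sig *v v)) > 0" "(sqrt (v \<bullet> (Sig *v v)))\<^sup>2 = v \<bullet> (Sig *v v)" by auto
    show ?thesis unfolding E gauss_vec_distr(4)[OF assms pos]
      using gauss_char_1d[OF s(1)] s(2) by simp
  qed
qed



lemma inner_Bv: "v \<bullet> (B *v y) = (\<Sum>j\<in>UNIV. wj B j v * y $ j)"
proof -
  have "v \<bullet> (B *v y) = (\<Sum>i\<in>UNIV. \<Sum>j\<in>UNIV. v $ i * (B $ i $ j * y $ j))"
    unfolding inner_vec_def matrix_vector_mult_def by (simp add: sum_distrib_left)
  also have "\<dots> = (\<Sum>j\<in>UNIV. \<Sum>i\<in>UNIV. v $ i * (B $ i $ j * y $ j))"
    by (rule sum.swap)
  also have "\<dots> = (\<Sum>j\<in>UNIV. wj B j v * y $ j)"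
    unfolding wj_def sum_distrib_right by (simp add: mult_ac)
  finally show ?thesis .
qed

lemma inner_x: "v \<bullet> (B *v z + g) = (\<Sum>j\<in>UNIV. wj B j v * z $ j) + v \<bullet> g"
  by (simp add: inner_add_right inner_Bv)

lemma diag_mat_mult: "(diag_mat a *v y) $ j = a $ j * y $ j"
proof -
  have "(diag_mat a *v y) $ j = (\<Sum>k\<in>UNIV. (if j = k then a $ j * y $ k else 0))"
    unfolding matrix_vector_mult_def diag_mat_def
    apply (simp only: vec_lambda_beta)
    apply (rule sum.cong)
     apply auto
    done
  also have "\<dots> = a $ j * y $ j" by simp
  finally show ?thesis .
qed

lemma quad_S: "v \<bullet> ((B ** diag_mat a ** transpose B + Sig) *v v) = (\<Sum>j\<in>UNIV. a $ j * (wj B j v)\<^sup>2) + v \<bullet> (Sig *v v)"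
proof -
  have "(B ** diag_mat a ** transpose B) *v v = B *v (diag_mat a *v (transpose B *v v))"
    by (simp only: matrix_vector_mul_assoc matrix_mul_assoc)
  moreover have "(diag_mat a *v (transpose B *v v)) $ j = a $ j * wj B j v" for j
  proof -
    have h: "(transpose B *v v) $ i = wj B i v" for i
      unfolding wj_def matrix_vector_mult_def transpose_def by (simp add: mult.commute)
    show ?thesis by (simp only: diag_mat_mult h)
  qed
  ultimately show ?thesis
    by (simp add: matrix_vector_mult_add_rdistrib inner_add_right inner_Bv power2_eq_square mult_ac)
qed

context prob_space
begin

lemma indep_var_nn_integral2:
  fixes X1 X2 :: "'a \<Rightarrow> real"
  assumes "indep_var borel X1 borel X2" "\<And>\<omega>. 0 \<le> X1 \<omega>" "\<And>\<omega>. 0 \<le> X2 \<omega>"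
  shows "(\<integral>\<^sup>+\<omega>. ennreal (X1 \<omega> * X2 \<omega>) \<partial>M) = (\<integral>\<^sup>+\<omega>. ennreal (X1 \<omega>) \<partial>M) * (\<integral>\<^sup>+\<omega>. ennreal (X2 \<omega>) \<partial>M)"
proof -
  have **: "(\<lambda> _. borel) = case_bool borel borel"
    by (rule ext, metis (full_types) bool.simps(3) bool.simps(4))
  have "indep_var borel (ennreal \<circ> X1) borel (ennreal \<circ> X2)"
    by (rule indep_var_compose[OF assms(1)]) measurable
  then have ind: "indep_vars (\<lambda>_. borel) (case_bool (ennreal \<circ> X1) (ennreal \<circ> X2)) UNIV"
    unfolding indep_var_def ** .
  have "(\<integral>\<^sup>+\<omega>. ennreal (X1 \<omega> * X2 \<omega>) \<partial>M) = (\<integral>\<^sup>+\<omega>. (\<Prod>i\<in>UNIV. (case_bool (ennreal \<circ> X1) (ennreal \<circ> X2) i \<omega>)) \<partial>M)"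
    using assms(2,3) by (simp add: UNIV_bool ennreal_mult mult.commute)
  also have "\<dots> = (\<Prod>i\<in>UNIV. \<integral>\<^sup>+\<omega>. (case_bool (ennreal \<circ> X1) (ennreal \<circ> X2) i \<omega>) \<partial>M)"
    by (rule indep_vars_nn_integral) (use ind in auto)
  also have "\<dots> = (\<integral>\<^sup>+\<omega>. ennreal (X1 \<omega>) \<partial>M) * (\<integral>\<^sup>+\<omega>. ennreal (X2 \<omega>) \<partial>M)"
    by (simp add: UNIV_bool mult.commute o_def)
  finally show ?thesis .
qed

lemma char_factor:
  fixes z g :: "'a \<Rightarrow> real^'k"
  assumes zm: "z \<in> borel_measurable M" and gm: "g \<in> borel_measurable M"
    and indz: "indep_vars (\<lambda>_. borel) (\<lambda>j \<omega>. z \<omega> $ j) UNIV"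
    and indzg: "indep_var borel z borel g"
  shows "(\<integral>\<omega>. exp (\<i> * complex_of_real (v \<bullet> (B *v z \<omega> + g \<omega>))) \<partial>M)
     = (\<Prod>j\<in>UNIV. \<integral>\<omega>. exp (\<i> * complex_of_real (wj B j v * z \<omega> $ j)) \<partial>M) * (\<integral>\<omega>. exp (\<i> * complex_of_real (v \<bullet> g \<omega>)) \<partial>M)"
proof -
  define h1 where "h1 = (\<lambda>y::real^'k. \<Prod>j\<in>UNIV. exp (\<i> * complex_of_real (wj B j v * y $ j)))"
  define h2 where "h2 = (\<lambda>y::real^'k. exp (\<i> * complex_of_real (v \<bullet> y)))"
  have h1m: "h1 \<in> borel_measurable borel" unfolding h1_def wj_def by measurable
  have h2m: "h2 \<in> borel_measurable borel" unfolding h2_def by measurable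
  have pt: "exp (\<i> * complex_of_real (v \<bullet> (B *v z \<omega> + g \<omega>))) = h1 (z \<omega>) * h2 (g \<omega>)" for \<omega>
    unfolding h1_def h2_def inner_x
    by (simp add: distrib_left exp_add exp_sum[symmetric] sum_distrib_left)
  have ind2: "indep_var borel (h1 \<circ> z) borel (h2 \<circ> g)"
    by (rule indep_var_compose[OF indzg h1m h2m])
  have n1: "norm (h1 y) = 1" for y
    unfolding h1_def by (simp add: prod_norm[symmetric] norm_exp_i_times)
  have n2: "norm (h2 y) = 1" for y
    unfolding h2_def by (simp add: norm_exp_i_times)
  have i1: "integrable M (h1 \<circ> z)"
    by (rule integrable_const_bound[of _ 1]) (use n1 h1m zm in auto)
  have i2: "integrable M (h2 \<circ> g)"
    by (rule integrable_const_bound[of _ 1]) (use n2 h2m gm in auto)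
  have "(\<integral>\<omega>. exp (\<i> * complex_of_real (v \<bullet> (B *v z \<omega> + g \<omega>))) \<partial>M) = (\<integral>\<omega>. (h1 \<circ> z) \<omega> * (h2 \<circ> g) \<omega> \<partial>M)"
    by (simp add: pt)
  also have "\<dots> = (\<integral>\<omega>. (h1 \<circ> z) \<omega> \<partial>M) * (\<integral>\<omega>. (h2 \<circ> g) \<omega> \<partial>M)"
    by (rule indep_var_lebesgue_integral[OF ind2 i1 i2])
  finally have step1: "(\<integral>\<omega>. exp (\<i> * complex_of_real (v \<bullet> (B *v z \<omega> + g \<omega>))) \<partial>M) = (\<integral>\<omega>. (h1 \<circ> z) \<omega> \<partial>M) * (\<integral>\<omega>. (h2 \<circ> g) \<omega> \<partial>M)" .
  have step2: "(\<integral>\<omega>. (h1 \<circ> z) \<omega> \<partial>M) = (\<Prod>j\<in>UNIV. \<integral>\<omega>. exp (\<i> * complex_of_real (wj B j v * z \<omega> $ j)) \<partial>M)"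
  proof -
    have zj[measurable]: "(\<lambda>\<omega>. z \<omega> $ j) \<in> borel_measurable M" for j
      by (rule measurable_compose[OF zm]) measurable
    have ij: "integrable M (\<lambda>\<omega>. exp (\<i> * complex_of_real (wj B j v * z \<omega> $ j)))" for j
      by (rule integrable_iexp) simp_all
    have ind: "indep_vars (\<lambda>_. borel) (\<lambda>j \<omega>. (\<lambda>t. exp (\<i> * complex_of_real (wj B j v * t))) (z \<omega> $ j)) UNIV"
      by (rule indep_vars_compose2[OF indz]) measurable
    have "(\<integral>\<omega>. (h1 \<circ> z) \<omega> \<partial>M) = (\<integral>\<omega>. (\<Prod>j\<in>UNIV. exp (\<i> * complex_of_real (wj B j v * z \<omega> $ j))) \<partial>M)"
      by (simp add: h1_def)
    also have "\<dots> = (\<Prod>j\<in>UNIV. \<integral>\<omega>. exp (\<i> * complex_of_real (wj B j v * z \<omega> $ j)) \<partial>M)"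
      by (rule indep_vars_lebesgue_integral[OF _ ind]) (simp, rule ij)
    finally show ?thesis .
  qed
  show ?thesis unfolding step1 step2 by (simp add: h2_def o_def)
qed

end


context prob_space
begin

lemma nn_exp_nonzero:
  assumes "f \<in> borel_measurable M"
  shows "(\<integral>\<^sup>+\<omega>. ennreal (exp (f \<omega>)) \<partial>M) \<noteq> 0"
proof
  assume "(\<integral>\<^sup>+\<omega>. ennreal (exp (f \<omega>)) \<partial>M) = 0"
  then have "AE \<omega> in M. ennreal (exp (f \<omega>)) = 0"
    by (subst (asm) nn_integral_0_iff_AE) (use assms in measurable)
  then have "AE \<omega> in M. False" by simp
  then show False by (simp add: AE_False)
qed

lemma mgf_factor:
  fixes z g :: "'a \<Rightarrow> real^'k"
  assumes zm: "z \<in> borel_measurable M"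
    and gauss: "gaussian_vec M g Sig"
    and indz: "indep_vars (\<lambda>_. borel) (\<lambda>j \<omega>. z \<omega> $ j) UNIV"
    and indzg: "indep_var borel z borel g"
    and int: "integrable M (\<lambda>\<omega>. exp (v \<bullet> (B *v z \<omega> + g \<omega>)))"
  shows "\<And>j. integrable M (\<lambda>\<omega>. exp (wj B j v * z \<omega> $ j))"
    and "(\<integral>\<omega>. exp (v \<bullet> (B *v z \<omega> + g \<omega>)) \<partial>M) = (\<Prod>j\<in>UNIV. \<integral>\<omega>. exp (wj B j v * z \<omega> $ j) \<partial>M) * exp (v \<bullet> (Sig *v v) / 2)"
proof -
  have gm: "g \<in> borel_measurable M" using gauss unfolding gaussian_vec_def by auto
  have zj[measurable]: "(\<lambda>\<omega>. z \<omega> $ j) \<in> borel_measurable M" for j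
    by (rule measurable_compose[OF zm]) measurable
  define h1 where "h1 = (\<lambda>y::real^'k. \<Prod>j\<in>UNIV. exp (wj B j v * y $ j))"
  define h2 where "h2 = (\<lambda>y::real^'k. exp (v \<bullet> y))"
  have h1m: "h1 \<in> borel_measurable borel" unfolding h1_def wj_def by measurable
  have h2m: "h2 \<in> borel_measurable borel" unfolding h2_def by measurable
  have pt: "exp (v \<bullet> (B *v z \<omega> + g \<omega>)) = h1 (z \<omega>) * h2 (g \<omega>)" for \<omega>
    unfolding h1_def h2_def inner_x
    by (simp add: exp_add exp_sum[symmetric])
  have ind2: "indep_var borel (h1 \<circ> z) borel (h2 \<circ> g)"
    by (rule indep_var_compose[OF indzg h1m h2m])
  have h1pos: "h1 y > 0" for y unfolding h1_def by (simp add: prod_pos)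
  have h2pos: "h2 y > 0" for y unfolding h2_def by simp
  have i2: "integrable M (\<lambda>\<omega>. h2 (g \<omega>))" unfolding h2_def by (rule gauss_mgf(1)[OF gauss])
  have "(\<integral>\<^sup>+\<omega>. ennreal (exp (v \<bullet> (B *v z \<omega> + g \<omega>))) \<partial>M) < \<infinity>"
    using int unfolding integrable_iff_bounded by simp
  moreover have "(\<integral>\<^sup>+\<omega>. ennreal (exp (v \<bullet> (B *v z \<omega> + g \<omega>))) \<partial>M)
      = (\<integral>\<^sup>+\<omega>. ennreal ((h1 \<circ> z) \<omega>)  \<partial>M) * (\<integral>\<^sup>+\<omega>. ennreal ((h2 \<circ> g) \<omega>) \<partial>M)"
    unfolding pt using indep_var_nn_integral2[OF ind2] h1pos h2pos by (simp add: less_imp_le)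
  moreover have "(\<integral>\<^sup>+\<omega>. ennreal ((h2 \<circ> g) \<omega>) \<partial>M) \<noteq> 0"
    unfolding h2_def o_def by (rule nn_exp_nonzero) (use gm in measurable)
  ultimately have fin1: "(\<integral>\<^sup>+\<omega>. ennreal ((h1 \<circ> z) \<omega>)  \<partial>M) \<noteq> \<top>"
    by (auto simp: ennreal_mult_eq_top_iff)
  have ind: "indep_vars (\<lambda>_. borel) (\<lambda>j \<omega>. (\<lambda>t. ennreal (exp (wj B j v * t))) (z \<omega> $ j)) UNIV"
    by (rule indep_vars_compose2[OF indz]) measurable
  have "(\<integral>\<^sup>+\<omega>. ennreal ((h1 \<circ> z) \<omega>)  \<partial>M) = (\<integral>\<^sup>+\<omega>. (\<Prod>j\<in>UNIV. ennreal (exp (wj B j v * z \<omega> $ j))) \<partial>M)"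
    unfolding h1_def o_def by (simp add: prod_ennreal)
  also have "\<dots> = (\<Prod>j\<in>UNIV. \<integral>\<^sup>+\<omega>. ennreal (exp (wj B j v * z \<omega> $ j)) \<partial>M)"
    by (rule indep_vars_nn_integral[OF _ ind]) auto
  finally have "(\<Prod>j\<in>UNIV. \<integral>\<^sup>+\<omega>. ennreal (exp (wj B j v * z \<omega> $ j)) \<partial>M) \<noteq> \<top>"
    using fin1 by simp
  moreover have "(\<integral>\<^sup>+\<omega>. ennreal (exp (wj B j v * z \<omega> $ j)) \<partial>M) \<noteq> 0" for j
    by (rule nn_exp_nonzero) measurable
  ultimately have fin: "(\<integral>\<^sup>+\<omega>. ennreal (exp (wj B j v * z \<omega> $ j)) \<partial>M) \<noteq> \<top>" for j
    by (auto simp: ennreal_prod_eq_top)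
  show ij: "integrable M (\<lambda>\<omega>. exp (wj B j v * z \<omega> $ j))" for j
    unfolding integrable_iff_bounded using fin[of j] by (auto simp: top.not_eq_extremum)
  have ind': "indep_vars (\<lambda>_. borel) (\<lambda>j \<omega>. (\<lambda>t. exp (wj B j v * t)) (z \<omega> $ j)) UNIV"
    by (rule indep_vars_compose2[OF indz]) measurable
  have i1: "integrable M (h1 \<circ> z)"
    unfolding h1_def o_def by (rule indep_vars_integrable[OF _ ind']) (simp, rule ij)
  have "(\<integral>\<omega>. exp (v \<bullet> (B *v z \<omega> + g \<omega>)) \<partial>M) = (\<integral>\<omega>. (h1 \<circ> z) \<omega> * (h2 \<circ> g) \<omega> \<partial>M)"
    by (simp add: pt)
  also have "\<dots> = (\<integral>\<omega>. (h1 \<circ> z) \<omega> \<partial>M) * (\<integral>\<omega>. (h2 \<circ> g) \<omega> \<partial>M)"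
    by (rule indep_var_lebesgue_integral[OF ind2 i1]) (use i2 in \<open>simp add: o_def\<close>)
  finally have step1: "(\<integral>\<omega>. exp (v \<bullet> (B *v z \<omega> + g \<omega>)) \<partial>M) = (\<integral>\<omega>. (h1 \<circ> z) \<omega> \<partial>M) * (\<integral>\<omega>. (h2 \<circ> g) \<omega> \<partial>M)" .
  have step2: "(\<integral>\<omega>. (h1 \<circ> z) \<omega> \<partial>M) = (\<Prod>j\<in>UNIV. \<integral>\<omega>. exp (wj B j v * z \<omega> $ j) \<partial>M)"
    unfolding h1_def o_def by (rule indep_vars_lebesgue_integral[OF _ ind']) (simp, rule ij)
  have step3: "(\<integral>\<omega>. (h2 \<circ> g) \<omega> \<partial>M) = exp (v \<bullet> (Sig *v v) / 2)"
    unfolding h2_def o_def by (rule gauss_mgf(2)[OF gauss])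
  show "(\<integral>\<omega>. exp (v \<bullet> (B *v z \<omega> + g \<omega>)) \<partial>M) = (\<Prod>j\<in>UNIV. \<integral>\<omega>. exp (wj B j v * z \<omega> $ j) \<partial>M) * exp (v \<bullet> (Sig *v v) / 2)"
    unfolding step1 step2 step3 ..
qed

end


lemma abs_pow_le_exp:
  fixes y :: real
  assumes "\<delta> > 0" "m \<le> 2"
  shows "\<bar>y\<bar> ^ m \<le> (1 + 4 / \<delta>\<^sup>2) * exp (\<delta> * \<bar>y\<bar>)"
proof -
  have a: "\<delta> * \<bar>y\<bar> / 2 \<le> exp (\<delta> * \<bar>y\<bar> / 2)"
    using exp_ge_add_one_self[of "\<delta> * \<bar>y\<bar> / 2"] by linarith
  have "(\<delta> * \<bar>y\<bar> / 2)\<^sup>2 \<le> (exp (\<delta> * \<bar>y\<bar> / 2))\<^sup>2"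
    using a assms by (intro power_mono) auto
  also have "\<dots> = exp (\<delta> * \<bar>y\<bar>)" by (simp flip: exp_double)
  finally have b: "\<delta>\<^sup>2 * y\<^sup>2 / 4 \<le> exp (\<delta> * \<bar>y\<bar>)" by (simp add: power_mult_distrib power_divide)
  have y2: "y\<^sup>2 \<le> 4 / \<delta>\<^sup>2 * exp (\<delta> * \<bar>y\<bar>)"
    using b assms by (simp add: field_simps)
  have e1: "1 \<le> exp (\<delta> * \<bar>y\<bar>)" using assms by simp
  have "\<bar>y\<bar> ^ m \<le> 1 + y\<^sup>2"
  proof -
    consider "m = 0" | "m = 1" | "m = 2" using assms by linarith
    then show ?thesis
    proof cases
      case 1 then show ?thesis by simp
    next
      case 3 then show ?thesis by (simp add: power2_abs)
    next
      case 2
      have "0 \<le> (\<bar>y\<bar> - 1)\<^sup>2" by simp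
      then have "2 * \<bar>y\<bar> \<le> 1 + y\<^sup>2" by (simp add: power2_diff power2_abs)
      then show ?thesis using 2 by simp
    qed
  qed
  also have "\<dots> \<le> exp (\<delta> * \<bar>y\<bar>) + 4 / \<delta>\<^sup>2 * exp (\<delta> * \<bar>y\<bar>)" using e1 y2 by linarith
  finally show ?thesis by (simp add: algebra_simps)
qed

lemma exp_shift_le:
  fixes y s t e :: real
  assumes "\<bar>s - t\<bar> < e / 2" "e > 0"
  shows "exp (s * y) * exp (e / 4 * \<bar>y\<bar>) \<le> exp ((t + 3 * e / 4) * y) + exp ((t - 3 * e / 4) * y)"
proof -
  have "(s - t) * y \<le> \<bar>s - t\<bar> * \<bar>y\<bar>" by (metis abs_ge_self abs_mult)
  also have "\<dots> \<le> e / 2 * \<bar>y\<bar>" using assms by (intro mult_right_mono) auto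
  finally have key: "s * y \<le> t * y + e / 2 * \<bar>y\<bar>" by (simp add: left_diff_distrib)
  show ?thesis
  proof (cases "y \<ge> 0")
    case True
    have "s * y + e / 4 * \<bar>y\<bar> \<le> (t + 3 * e / 4) * y"
      using key True by (simp add: distrib_right)
    then have "exp (s * y) * exp (e / 4 * \<bar>y\<bar>) \<le> exp ((t + 3 * e / 4) * y)"
      by (simp flip: exp_add)
    then show ?thesis by (smt (verit) exp_gt_zero)
  next
    case False
    have "s * y + e / 4 * \<bar>y\<bar> \<le> (t - 3 * e / 4) * y"
      using key False by (simp add: left_diff_distrib)
    then have "exp (s * y) * exp (e / 4 * \<bar>y\<bar>) \<le> exp ((t - 3 * e / 4) * y)"
      by (simp flip: exp_add)
    then show ?thesis by (smt (verit) exp_gt_zero)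
  qed
qed

lemma mgf_dom:
  fixes y s t e :: real
  assumes "\<bar>s - t\<bar> < e / 2" "e > 0" "m \<le> 2"
  shows "\<bar>y ^ m * exp (s * y)\<bar> \<le> (1 + 4 / (e/4)\<^sup>2) * (exp ((t + 3 * e / 4) * y) + exp ((t - 3 * e / 4) * y))"
proof -
  have "\<bar>y ^ m * exp (s * y)\<bar> = \<bar>y\<bar> ^ m * exp (s * y)" by (simp add: abs_mult power_abs)
  also have "\<dots> \<le> (1 + 4 / (e/4)\<^sup>2) * exp (e / 4 * \<bar>y\<bar>) * exp (s * y)"
    by (rule mult_right_mono[OF abs_pow_le_exp]) (use assms in auto)
  also have "\<dots> = (1 + 4 / (e/4)\<^sup>2) * (exp (s * y) * exp (e / 4 * \<bar>y\<bar>))" by (simp add: mult_ac)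
  also have "\<dots> \<le> (1 + 4 / (e/4)\<^sup>2) * (exp ((t + 3 * e / 4) * y) + exp ((t - 3 * e / 4) * y))"
    by (rule mult_left_mono[OF exp_shift_le]) (use assms in \<open>auto intro: add_nonneg_nonneg\<close>)
  finally show ?thesis .
qed

lemma mgf_deriv:
  fixes z1 :: "'a \<Rightarrow> real"
  assumes zm: "z1 \<in> borel_measurable M" and e: "e > 0"
    and int: "\<And>s. s \<in> ball t e \<Longrightarrow> integrable M (\<lambda>\<omega>. exp (s * z1 \<omega>))"
    and n: "n \<le> 1"
  shows "((\<lambda>s. \<integral>\<omega>. z1 \<omega> ^ n * exp (s * z1 \<omega>) \<partial>M) has_real_derivative (\<integral>\<omega>. z1 \<omega> ^ Suc n * exp (t * z1 \<omega>) \<partial>M)) (at t)"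
proof -
  define K where "K = (1 + 4 / (e/4)\<^sup>2)"
  define g where "g \<omega> = K * (exp ((t + 3 * e / 4) * z1 \<omega>) + exp ((t - 3 * e / 4) * z1 \<omega>))" for \<omega>
  have i1: "integrable M (\<lambda>\<omega>. exp ((t + 3 * e / 4) * z1 \<omega>))"
    by (rule int) (use e in \<open>simp add: dist_real_def\<close>)
  have i2: "integrable M (\<lambda>\<omega>. exp ((t - 3 * e / 4) * z1 \<omega>))"
    by (rule int) (use e in \<open>simp add: dist_real_def\<close>)
  have gi: "integrable M g"
    unfolding g_def by (rule integrable_mult_right, rule Bochner_Integration.integrable_add[OF i1 i2])
  have dom: "\<bar>z1 \<omega> ^ m * exp (s * z1 \<omega>)\<bar> \<le> g \<omega>" if "s \<in> ball t (e/2)" "m \<le> 2" for s \<omega> m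
    unfolding g_def K_def by (rule mgf_dom) (use that e in \<open>auto simp: dist_real_def abs_minus_commute\<close>)
  have intm: "integrable M (\<lambda>\<omega>. z1 \<omega> ^ m * exp (s * z1 \<omega>))" if "s \<in> ball t (e/2)" "m \<le> 2" for s m
  proof (rule Bochner_Integration.integrable_bound[OF gi])
    show "(\<lambda>\<omega>. z1 \<omega> ^ m * exp (s * z1 \<omega>)) \<in> borel_measurable M" using zm by measurable
    show "AE \<omega> in M. norm (z1 \<omega> ^ m * exp (s * z1 \<omega>)) \<le> norm (g \<omega>)"
      using dom[OF that] by (auto intro!: AE_I2 order_trans[OF _ abs_ge_self])
  qed
  show ?thesis
  proof (rule DERIV_integral[where e="e/2" and g=g])
    show "0 < e / 2" using e by simp
    show "((\<lambda>s. z1 \<omega> ^ n * exp (s * z1 \<omega>)) has_real_derivative z1 \<omega> ^ Suc n * exp (s * z1 \<omega>)) (at s)" for s \<omega>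
      by (auto intro!: derivative_eq_intros simp: mult_ac)
    show "integrable M (\<lambda>\<omega>. z1 \<omega> ^ n * exp (s * z1 \<omega>))" if "s \<in> ball t (e/2)" for s
      using intm[OF that] n by simp
    show "(\<lambda>\<omega>. z1 \<omega> ^ Suc n * exp (t * z1 \<omega>)) \<in> borel_measurable M" using zm by measurable
    show "integrable M g" by (rule gi)
    show "\<bar>z1 \<omega> ^ Suc n * exp (s * z1 \<omega>)\<bar> \<le> g \<omega>" if "s \<in> ball t (e/2)" for s \<omega>
      using dom[OF that, of "Suc n"] n by simp
  qed
qed



lemma abs_le_1_sq: "\<bar>y::real\<bar> \<le> 1 + y\<^sup>2"
proof -
  have "0 \<le> (\<bar>y\<bar> - 1)\<^sup>2" by simp
  then have "2 * \<bar>y\<bar> \<le> 1 + y\<^sup>2" by (simp add: power2_diff power2_abs)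
  then show ?thesis by simp
qed

context prob_space
begin

lemma cs_deriv:
  fixes z1 :: "'a \<Rightarrow> real"
  assumes zm[measurable]: "z1 \<in> borel_measurable M" and z2: "integrable M (\<lambda>\<omega>. (z1 \<omega>)\<^sup>2)"
  shows "((\<lambda>s. \<integral>\<omega>. cos (s * z1 \<omega>) \<partial>M) has_real_derivative (\<integral>\<omega>. - (z1 \<omega> * sin (t * z1 \<omega>)) \<partial>M)) (at t)"
    and "((\<lambda>s. \<integral>\<omega>. sin (s * z1 \<omega>) \<partial>M) has_real_derivative (\<integral>\<omega>. z1 \<omega> * cos (t * z1 \<omega>) \<partial>M)) (at t)"
    and "((\<lambda>s. \<integral>\<omega>. - (z1 \<omega> * sin (s * z1 \<omega>)) \<partial>M) has_real_derivative (\<integral>\<omega>. - ((z1 \<omega>)\<^sup>2 * cos (t * z1 \<omega>)) \<partial>M)) (at t)"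
    and "((\<lambda>s. \<integral>\<omega>. z1 \<omega> * cos (s * z1 \<omega>) \<partial>M) has_real_derivative (\<integral>\<omega>. - ((z1 \<omega>)\<^sup>2 * sin (t * z1 \<omega>)) \<partial>M)) (at t)"
proof -
  define g where "g \<omega> = 1 + (z1 \<omega>)\<^sup>2" for \<omega>
  have gi: "integrable M g" unfolding g_def by (intro Bochner_Integration.integrable_add z2) auto
  have b1: "\<bar>z1 \<omega> * c\<bar> \<le> g \<omega>" if "\<bar>c\<bar> \<le> 1" for \<omega> c
  proof -
    have "\<bar>z1 \<omega> * c\<bar> \<le> \<bar>z1 \<omega>\<bar>" using that by (simp add: abs_mult mult_left_le)
    then show ?thesis using abs_le_1_sq[of "z1 \<omega>"] unfolding g_def by linarith
  qed
  have b2: "\<bar>(z1 \<omega>)\<^sup>2 * c\<bar> \<le> g \<omega>" if "\<bar>c\<bar> \<le> 1" for \<omega> c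
  proof -
    have "\<bar>(z1 \<omega>)\<^sup>2 * c\<bar> \<le> (z1 \<omega>)\<^sup>2" using that by (simp add: abs_mult mult_left_le)
    then show ?thesis unfolding g_def by linarith
  qed
  have ib: "integrable M f" if "f \<in> borel_measurable M" "\<And>\<omega>. \<bar>f \<omega>\<bar> \<le> g \<omega>" for f
  proof (rule Bochner_Integration.integrable_bound[OF gi that(1)])
    show "AE \<omega> in M. norm (f \<omega>) \<le> norm (g \<omega>)"
      using that(2) by (auto intro!: AE_I2 order_trans[OF _ abs_ge_self])
  qed
  have b2': "\<bar>z1 \<omega> * (z1 \<omega> * c)\<bar> \<le> g \<omega>" if "\<bar>c\<bar> \<le> 1" for \<omega> c
    using b2[OF that, of \<omega>] by (simp add: power2_eq_square mult_ac)
  have izs': "integrable M (\<lambda>\<omega>. z1 \<omega> * sin (s * z1 \<omega>))" for s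
    by (rule ib) (use b1 in auto)
  have icos: "integrable M (\<lambda>\<omega>. cos (s * z1 \<omega>))" for s
    by (rule integrable_const_bound[of _ 1]) auto
  have isin: "integrable M (\<lambda>\<omega>. sin (s * z1 \<omega>))" for s
    by (rule integrable_const_bound[of _ 1]) auto
  have izs: "integrable M (\<lambda>\<omega>. - (z1 \<omega> * sin (s * z1 \<omega>)))" for s
    by (rule ib) (use b1 in auto)
  have izc: "integrable M (\<lambda>\<omega>. z1 \<omega> * cos (s * z1 \<omega>))" for s
    by (rule ib) (use b1 in auto)
  show "((\<lambda>s. \<integral>\<omega>. cos (s * z1 \<omega>) \<partial>M) has_real_derivative (\<integral>\<omega>. - (z1 \<omega> * sin (t * z1 \<omega>)) \<partial>M)) (at t)"
    by (rule DERIV_integral[where e=1 and g=g]) (auto intro!: derivative_eq_intros icos gi b1 simp: mult_ac)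
  show "((\<lambda>s. \<integral>\<omega>. sin (s * z1 \<omega>) \<partial>M) has_real_derivative (\<integral>\<omega>. z1 \<omega> * cos (t * z1 \<omega>) \<partial>M)) (at t)"
    by (rule DERIV_integral[where e=1 and g=g]) (auto intro!: derivative_eq_intros isin gi b1 simp: mult_ac)
  show "((\<lambda>s. \<integral>\<omega>. - (z1 \<omega> * sin (s * z1 \<omega>)) \<partial>M) has_real_derivative (\<integral>\<omega>. - ((z1 \<omega>)\<^sup>2 * cos (t * z1 \<omega>)) \<partial>M)) (at t)"
    by (rule DERIV_integral[where e=1 and g=g]) (auto intro!: derivative_eq_intros izs izs' gi b2 b2' simp: mult_ac power2_eq_square)
  show "((\<lambda>s. \<integral>\<omega>. z1 \<omega> * cos (s * z1 \<omega>) \<partial>M) has_real_derivative (\<integral>\<omega>. - ((z1 \<omega>)\<^sup>2 * sin (t * z1 \<omega>)) \<partial>M)) (at t)"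
    by (rule DERIV_integral[where e=1 and g=g]) (auto intro!: derivative_eq_intros izc gi b2 b2' simp: mult_ac power2_eq_square)
qed

end


lemma im_deriv_zero:
  fixes f :: "real^'k \<Rightarrow> complex"
  assumes U: "open U" "v \<in> U" and d: "(f has_derivative f') (at v)"
    and per: "\<And>v'. v' \<in> U \<Longrightarrow> \<exists>n::int. Im (f v') = 2 * pi * of_int n"
  shows "Im (f' h) = 0"
proof -
  have "isCont (\<lambda>v. Im (f v)) v"
    using has_derivative_continuous[OF d] by (rule continuous_Im)
  then have "\<exists>d>0. \<forall>v'. dist v' v < d \<longrightarrow> dist (Im (f v')) (Im (f v)) < pi"
    unfolding continuous_at_eps_delta using pi_gt_zero by simp
  then obtain d1 where d1: "d1 > 0" "\<And>v'. dist v' v < d1 \<Longrightarrow> dist (Im (f v')) (Im (f v)) < pi"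
    by auto
  obtain d2 where d2: "d2 > 0" "ball v d2 \<subseteq> U" using U open_contains_ball by blast
  define r where "r = min d1 d2"
  have const: "Im (f v') = Im (f v)" if "v' \<in> ball v r" for v'
  proof -
    have "v' \<in> U" using that d2 by (auto simp: r_def)
    then obtain n' :: int where n': "Im (f v') = 2 * pi * of_int n'" using per by blast
    obtain n :: int where n: "Im (f v) = 2 * pi * of_int n" using per U by blast
    have "dist v' v < d1" using that by (auto simp: r_def dist_commute)
    then have "\<bar>Im (f v') - Im (f v)\<bar> < pi" using d1(2)[of v'] by (simp add: dist_real_def)
    then have lt: "\<bar>2 * pi * of_int n' - 2 * pi * of_int n\<bar> < pi" by (simp only: n n')
    have "n' = n"
    proof (rule ccontr)
      assume "n' \<noteq> n"
      then consider "n' \<ge> n + 1" | "n \<ge> n' + 1" by linarith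
      then show False
      proof cases
        case 1
        then have "real_of_int n' \<ge> real_of_int n + 1" by linarith
        then have "2 * pi * real_of_int n' \<ge> 2 * pi * (real_of_int n + 1)"
          using pi_gt_zero by (intro mult_left_mono) auto
        then show False using lt pi_gt_zero by (simp add: distrib_left)
      next
        case 2
        then have "real_of_int n \<ge> real_of_int n' + 1" by linarith
        then have "2 * pi * real_of_int n \<ge> 2 * pi * (real_of_int n' + 1)"
          using pi_gt_zero by (intro mult_left_mono) auto
        then show False using lt pi_gt_zero by (simp add: distrib_left)
      qed
    qed
    then show ?thesis using n n' by simp
  qed
  have "((\<lambda>v. Im (f v)) has_derivative (\<lambda>h. 0)) (at v)"
  proof (rule has_derivative_transform_within_open[OF has_derivative_const[of "Im (f v)"], of "ball v r"])
    show "open (ball v r)" by simp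
    show "v \<in> ball v r" using d1 d2 by (simp add: r_def)
    show "Im (f v) = Im (f y)" if "y \<in> ball v r" for y using const[OF that] by simp
  qed
  moreover have "((\<lambda>v. Im (f v)) has_derivative (\<lambda>h. Im (f' h))) (at v)"
    by (rule has_derivative_Im[OF d])
  ultimately have "(\<lambda>h. Im (f' h)) = (\<lambda>h. 0)" by (rule has_derivative_unique[rotated])
  then show ?thesis by metis
qed

lemma exp_real_pos_Im:
  assumes "exp w = complex_of_real r" "r > 0"
  shows "\<exists>n::int. Im w = 2 * pi * of_int n"
proof -
  have "exp (w - complex_of_real (ln r)) = 1"
    using assms by (simp add: exp_diff exp_of_real)
  then obtain n :: int where "Im (w - complex_of_real (ln r)) = of_int (2 * n) * pi"
    unfolding exp_eq_1 by blast
  then show ?thesis by (intro exI[of _ n]) simp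
qed



lemma wj_open_image:
  fixes B :: "real^'k^'k" and v :: "real^'k"
  assumes "open U" "v \<in> U" "\<exists>i. B$i$j \<noteq> 0"
  shows "\<exists>e>0. \<forall>s\<in>ball (wj B j v) e. \<exists>v'\<in>U. wj B j v' = s"
proof -
  obtain d where d: "d > 0" "ball v d \<subseteq> U" using assms open_contains_ball by blast
  define c :: "real^'k" where "c = (\<chi> i. B$i$j)"
  have wc: "wj B j c = (norm c)\<^sup>2"
    unfolding power2_norm_eq_inner wj_def c_def inner_vec_def by simp
  have "c \<noteq> 0" using assms(3) by (auto simp: c_def vec_eq_iff)
  then have cpos: "norm c > 0" by simp
  show ?thesis
  proof (intro exI[of _ "d * norm c"] conjI ballI)
    show "0 < d * norm c" using d cpos by simp
    fix s assume s: "s \<in> ball (wj B j v) (d * norm c)"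
    define k where "k = (s - wj B j v) / (norm c)\<^sup>2"
    define v' where "v' = v + k *\<^sub>R c"
    have "wj B j v' = wj B j v + k * (norm c)\<^sup>2" unfolding v'_def wj_linear wc ..
    also have "\<dots> = s" using cpos by (simp add: k_def)
    finally have w: "wj B j v' = s" .
    have "dist v v' = \<bar>k\<bar> * norm c" by (simp add: v'_def dist_norm)
    also have "\<dots> = \<bar>s - wj B j v\<bar> / norm c" using cpos by (simp add: k_def abs_divide power2_eq_square)
    also have "\<dots> < d" using s cpos by (simp add: dist_real_def divide_less_eq abs_minus_commute)
    finally have "v' \<in> U" using d by auto
    then show "\<exists>v'\<in>U. wj B j v' = s" using w by blast
  qed
qed

lemma (in prob_space) integral_exp_pos:
  fixes f :: "'a \<Rightarrow> real"
  assumes "integrable M (\<lambda>\<omega>. exp (f \<omega>))"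
  shows "(\<integral>\<omega>. exp (f \<omega>) \<partial>M) > 0"
proof -
  have "(\<integral>\<omega>. exp (f \<omega>) \<partial>M) \<ge> 0" by simp
  moreover have "(\<integral>\<omega>. exp (f \<omega>) \<partial>M) \<noteq> 0"
  proof
    assume "(\<integral>\<omega>. exp (f \<omega>) \<partial>M) = 0"
    then have "AE \<omega> in M. exp (f \<omega>) = 0"
      using integral_nonneg_eq_0_iff_AE[OF assms] by simp
    then have "AE \<omega> in M. False" by simp
    then show False by (simp add: AE_False)
  qed
  ultimately show ?thesis by linarith
qed

lemma (in prob_space) cgf_part:
  fixes z g x :: "'a \<Rightarrow> real^'k" and B Sig S H :: "real^'k^'k" and a :: "real^'k"
  assumes zm: "z \<in> borel_measurable M"
    and indz: "indep_vars (\<lambda>_. borel) (\<lambda>j \<omega>. z \<omega> $ j) UNIV"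
    and gauss: "gaussian_vec M g Sig"
    and indzg: "indep_var borel z borel g"
    and x_def: "x = (\<lambda>\<omega>. B *v z \<omega> + g \<omega>)"
    and S_def: "S = B ** diag_mat a ** transpose B + Sig"
    and hess: "hessian_at (wd_cgf M x) (cf_cgf M x S) u H"
  shows "\<exists>d. H = B ** diag_mat d ** transpose B"
proof -
  obtain U Df where U: "open U" "u \<in> U" and wd: "\<And>v. v \<in> U \<Longrightarrow> wd_cgf M x v"
    and Df: "\<And>v. v \<in> U \<Longrightarrow> (cf_cgf M x S has_derivative (\<lambda>h. \<Sum>j\<in>UNIV. (h $ j) *\<^sub>R (Df v $ j))) (at v)"
    and HD: "\<And>j. ((\<lambda>v. Df v $ j) has_derivative (\<lambda>h. \<Sum>i\<in>UNIV. (h $ i) *\<^sub>R (H $ i $ j))) (at u)"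
    using hess unfolding hessian_at_def by blast
  have zj[measurable]: "(\<lambda>\<omega>. z \<omega> $ j) \<in> borel_measurable M" for j
    by (rule measurable_compose[OF zm]) measurable
  define Mg where "Mg j t = (\<integral>\<omega>. exp (t * z \<omega> $ j) \<partial>M)" for j t
  define M1 where "M1 j t = (\<integral>\<omega>. z \<omega> $ j * exp (t * z \<omega> $ j) \<partial>M)" for j t
  define M2 where "M2 j t = (\<integral>\<omega>. (z \<omega> $ j)\<^sup>2 * exp (t * z \<omega> $ j) \<partial>M)" for j t
  define G where "G j t = ln (Mg j t) - a $ j / 2 * t\<^sup>2" for j t
  define G1 where "G1 j t = M1 j t / Mg j t - a $ j * t" for j t
  have vint: "integrable M (\<lambda>\<omega>. exp (v \<bullet> (B *v z \<omega> + g \<omega>)))" if "v \<in> U" for v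
    using wd[OF that] unfolding wd_cgf_def x_def by simp
  have intj: "integrable M (\<lambda>\<omega>. exp (wj B j v * z \<omega> $ j))" if "v \<in> U" for v j
    by (rule mgf_factor(1)[OF zm gauss indz indzg vint[OF that]])
  have Mpos: "Mg j (wj B j v) > 0" if "v \<in> U" for v j
    unfolding Mg_def by (rule integral_exp_pos[OF intj[OF that]])
  have ball_int: "\<exists>e>0. \<forall>s\<in>ball (wj B j v) e. integrable M (\<lambda>\<omega>. exp (s * z \<omega> $ j))"
    if "v \<in> U" "\<exists>i. B$i$j \<noteq> 0" for v j
    using wj_open_image[OF U(1) that] intj by metis
  have dM: "(Mg j has_real_derivative M1 j t) (at t)" and dM1: "(M1 j has_real_derivative M2 j t) (at t)"
    if tv: "v \<in> U" "\<exists>i. B$i$j \<noteq> 0" "t = wj B j v" for v j t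
  proof -
    obtain e where e: "e > 0" "\<And>s. s \<in> ball t e \<Longrightarrow> integrable M (\<lambda>\<omega>. exp (s * z \<omega> $ j))"
      using ball_int[OF tv(1,2)] tv(3) by blast
    show "(Mg j has_real_derivative M1 j t) (at t)"
      using mgf_deriv[where n=0 and t=t, OF zj e(1) e(2)] unfolding Mg_def M1_def by simp
    show "(M1 j has_real_derivative M2 j t) (at t)"
      using mgf_deriv[where n=1 and t=t, OF zj e(1) e(2)] unfolding M2_def M1_def by (simp add: power2_eq_square mult_ac)
  qed
  have feq: "cf_cgf M x S v = (\<Sum>j\<in>UNIV. G j (wj B j v))" if "v \<in> U" for v
  proof -
    have "(\<integral>\<omega>. exp (v \<bullet> x \<omega>) \<partial>M) = (\<Prod>j\<in>UNIV. Mg j (wj B j v)) * exp (v \<bullet> (Sig *v v) / 2)"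
      unfolding x_def Mg_def by (rule mgf_factor(2)[OF zm gauss indz indzg vint[OF that]])
    then have "ln (\<integral>\<omega>. exp (v \<bullet> x \<omega>) \<partial>M) = (\<Sum>j\<in>UNIV. ln (Mg j (wj B j v))) + v \<bullet> (Sig *v v) / 2"
      using Mpos[OF that] by (simp add: ln_mult prod_pos ln_prod less_imp_neq[symmetric])
    then show ?thesis
      unfolding cf_cgf_def G_def S_def quad_S
      by (simp add: sum_subtractf sum_distrib_left sum_divide_distrib algebra_simps)
  qed
  have dG: "(G j has_real_derivative G1 j (wj B j v)) (at (wj B j v))"
    if "v \<in> U" "\<exists>i. B$i$j \<noteq> 0" for j v
    unfolding G_def G1_def using Mpos[OF that(1), of j] dM[OF that refl]
    by (auto intro!: derivative_eq_intros simp: field_simps)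
  have "\<exists>D. (\<exists>i. B$i$j \<noteq> 0) \<longrightarrow> (G1 j has_real_derivative D) (at (wj B j u))" for j
  proof (cases "\<exists>i. B$i$j \<noteq> 0")
    case True
    have "(G1 j has_real_derivative ((M2 j (wj B j u) * Mg j (wj B j u) - M1 j (wj B j u) * M1 j (wj B j u)) / (Mg j (wj B j u))\<^sup>2 - a $ j)) (at (wj B j u))"
      unfolding G1_def using Mpos[OF U(2), of j] dM[OF U(2) True refl] dM1[OF U(2) True refl]
      by (auto intro!: derivative_eq_intros simp: field_simps power2_eq_square)
    then show ?thesis by blast
  qed simp
  then obtain G2 where G2: "\<And>j. (\<exists>i. B$i$j \<noteq> 0) \<Longrightarrow> (G1 j has_real_derivative G2 j) (at (wj B j u))"
    by metis
  have "H = B ** diag_mat (\<chi> j. if (\<exists>i. B$i$j \<noteq> 0) then G2 j else 0) ** transpose B"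
    by (rule hess_sep[OF U feq dG G2 Df HD])
  then show ?thesis by blast
qed



lemma sum_axis_scaleR: "(\<Sum>i\<in>UNIV. (axis j (1::real) $ i) *\<^sub>R c i) = (c j :: 'b::real_vector)"
proof -
  have "\<And>i. (axis j (1::real) $ i) *\<^sub>R c i = (if j = i then c i else 0)" by (simp add: axis_def)
  then show ?thesis by simp
qed

lemma (in prob_space) char_part:
  fixes z g x :: "'a \<Rightarrow> real^'k" and B Sig S :: "real^'k^'k" and a :: "real^'k" and H :: "complex^'k^'k"
  assumes zm: "z \<in> borel_measurable M"
    and indz: "indep_vars (\<lambda>_. borel) (\<lambda>j \<omega>. z \<omega> $ j) UNIV"
    and z2: "\<forall>j. integrable M (\<lambda>\<omega>. (z \<omega> $ j)^2)"
    and gauss: "gaussian_vec M g Sig"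
    and indzg: "indep_var borel z borel g"
    and x_def: "x = (\<lambda>\<omega>. B *v z \<omega> + g \<omega>)"
    and S_def: "S = B ** diag_mat a ** transpose B + Sig"
    and hess: "hessian_at (wd_char M x) (cf_char M x S) u H"
  shows "\<exists>d. H = (\<chi> i j. complex_of_real ((B ** diag_mat d ** transpose B) $ i $ j))"
proof -
  obtain U Df where U: "open U" "u \<in> U" and wd: "\<And>v. v \<in> U \<Longrightarrow> wd_char M x v"
    and Df: "\<And>v. v \<in> U \<Longrightarrow> (cf_char M x S has_derivative (\<lambda>h. \<Sum>j\<in>UNIV. (h $ j) *\<^sub>R (Df v $ j))) (at v)"
    and HD: "\<And>j. ((\<lambda>v. Df v $ j) has_derivative (\<lambda>h. \<Sum>i\<in>UNIV. (h $ i) *\<^sub>R (H $ i $ j))) (at u)"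
    using hess unfolding hessian_at_def by blast
  have gm: "g \<in> borel_measurable M" using gauss unfolding gaussian_vec_def by auto
  have zj[measurable]: "(\<lambda>\<omega>. z \<omega> $ j) \<in> borel_measurable M" for j
    by (rule measurable_compose[OF zm]) measurable
  define q where "q v = v \<bullet> (Sig *v v)" for v
  define \<Phi> where "\<Phi> j t = (\<integral>\<omega>. exp (\<i> * complex_of_real (t * z \<omega> $ j)) \<partial>M)" for j t
  define C where "C j t = (\<integral>\<omega>. cos (t * z \<omega> $ j) \<partial>M)" for j t
  define Sn where "Sn j t = (\<integral>\<omega>. sin (t * z \<omega> $ j) \<partial>M)" for j t
  define C1 where "C1 j t = (\<integral>\<omega>. - (z \<omega> $ j * sin (t * z \<omega> $ j)) \<partial>M)" for j t
  define Sn1 where "Sn1 j t = (\<integral>\<omega>. z \<omega> $ j * cos (t * z \<omega> $ j) \<partial>M)" for j t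
  define C2 where "C2 j t = (\<integral>\<omega>. - ((z \<omega> $ j)\<^sup>2 * cos (t * z \<omega> $ j)) \<partial>M)" for j t
  define Sn2 where "Sn2 j t = (\<integral>\<omega>. - ((z \<omega> $ j)\<^sup>2 * sin (t * z \<omega> $ j)) \<partial>M)" for j t
  define \<phi> where "\<phi> v = (\<integral>\<omega>. exp (\<i> * complex_of_real (v \<bullet> x \<omega>)) \<partial>M)" for v
  have dC: "(C j has_real_derivative C1 j t) (at t)" for j t
    unfolding C_def C1_def using cs_deriv(1)[OF zj z2[rule_format]] .
  have dSn: "(Sn j has_real_derivative Sn1 j t) (at t)" for j t
    unfolding Sn_def Sn1_def using cs_deriv(2)[OF zj z2[rule_format]] .
  have dC1: "(C1 j has_real_derivative C2 j t) (at t)" for j t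
    unfolding C2_def C1_def using cs_deriv(3)[OF zj z2[rule_format]] .
  have dSn1: "(Sn1 j has_real_derivative Sn2 j t) (at t)" for j t
    unfolding Sn2_def Sn1_def using cs_deriv(4)[OF zj z2[rule_format]] .
  have iint: "integrable M (\<lambda>\<omega>. exp (\<i> * complex_of_real (t * z \<omega> $ j)))" for t j
    by (rule integrable_iexp) auto
  have ReP: "Re (\<Phi> j t) = C j t" for j t
  proof -
    have "Re (\<Phi> j t) = (\<integral>\<omega>. Re (exp (\<i> * complex_of_real (t * z \<omega> $ j))) \<partial>M)"
      unfolding \<Phi>_def by (rule integral_Re[symmetric, OF iint])
    then show ?thesis by (simp add: C_def Re_exp)
  qed
  have ImP: "Im (\<Phi> j t) = Sn j t" for j t
  proof -
    have "Im (\<Phi> j t) = (\<integral>\<omega>. Im (exp (\<i> * complex_of_real (t * z \<omega> $ j))) \<partial>M)"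
      unfolding \<Phi>_def by (rule integral_Im[symmetric, OF iint])
    then show ?thesis by (simp add: Sn_def Im_exp)
  qed
  have nP: "(cmod (\<Phi> j t))\<^sup>2 = (C j t)\<^sup>2 + (Sn j t)\<^sup>2" for j t
    by (simp add: cmod_power2 ReP ImP)
  have phi_eq: "\<phi> v = (\<Prod>j\<in>UNIV. \<Phi> j (wj B j v)) * complex_of_real (exp (- q v / 2))" for v
    unfolding \<phi>_def \<Phi>_def x_def q_def
    using char_factor[OF zm gm indz indzg, of v B] gauss_char[OF gauss, of v] by simp
  have phi_nz: "\<phi> v \<noteq> 0" if "v \<in> U" for v
    using wd[OF that] unfolding wd_char_def \<phi>_def by simp
  have Pnz: "\<Phi> j (wj B j v) \<noteq> 0" if "v \<in> U" for v j
    using phi_nz[OF that] unfolding phi_eq by auto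
  have Dpos: "(C j (wj B j v))\<^sup>2 + (Sn j (wj B j v))\<^sup>2 > 0" if "v \<in> U" for v j
    using Pnz[OF that, of j] nP[of j "wj B j v"] by (metis zero_less_norm_iff zero_less_power)
  have cfeq: "cf_char M x S v = Ln (\<phi> v) + Ln (cnj (\<phi> v)) + complex_of_real (v \<bullet> (S *v v))" for v
  proof -
    have "(\<integral>\<omega>. exp (- (\<i> * complex_of_real (v \<bullet> x \<omega>))) \<partial>M) = (\<integral>\<omega>. cnj (exp (\<i> * complex_of_real (v \<bullet> x \<omega>))) \<partial>M)"
      by (simp add: exp_cnj)
    also have "\<dots> = cnj (\<phi> v)" unfolding \<phi>_def by (rule Bochner_Integration.integral_cnj)
    finally show ?thesis unfolding cf_char_def \<phi>_def by simp
  qed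
  define G where "G j t = ln ((C j t)\<^sup>2 + (Sn j t)\<^sup>2) + a $ j * t\<^sup>2" for j t
  define G1 where "G1 j t = (2 * C j t * C1 j t + 2 * Sn j t * Sn1 j t) / ((C j t)\<^sup>2 + (Sn j t)\<^sup>2) + 2 * a $ j * t" for j t
  have ReF: "Re (cf_char M x S v) = (\<Sum>j\<in>UNIV. G j (wj B j v))" if "v \<in> U" for v
  proof -
    have n: "norm (\<phi> v) = (\<Prod>j\<in>UNIV. norm (\<Phi> j (wj B j v))) * exp (- q v / 2)"
      unfolding phi_eq by (simp add: norm_mult prod_norm)
    have "Re (cf_char M x S v) = 2 * ln (norm (\<phi> v)) + v \<bullet> (S *v v)"
      unfolding cfeq using phi_nz[OF that] by simp
    also have "2 * ln (norm (\<phi> v)) = (\<Sum>j\<in>UNIV. 2 * ln (norm (\<Phi> j (wj B j v)))) - q v"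
      unfolding n using Pnz[OF that] by (simp add: ln_mult prod_pos ln_prod sum_distrib_left)
    also have "(\<Sum>j\<in>UNIV. 2 * ln (norm (\<Phi> j (wj B j v)))) = (\<Sum>j\<in>UNIV. ln ((C j (wj B j v))\<^sup>2 + (Sn j (wj B j v))\<^sup>2))"
    proof (rule sum.cong[OF refl])
      fix j
      have "2 * ln (norm (\<Phi> j (wj B j v))) = ln ((norm (\<Phi> j (wj B j v)))\<^sup>2)"
        using Pnz[OF that, of j] by (simp add: ln_realpow)
      then show "2 * ln (norm (\<Phi> j (wj B j v))) = ln ((C j (wj B j v))\<^sup>2 + (Sn j (wj B j v))\<^sup>2)"
        by (simp add: nP)
    qed
    also have "v \<bullet> (S *v v) = (\<Sum>j\<in>UNIV. a $ j * (wj B j v)\<^sup>2) + q v"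
      unfolding S_def q_def by (rule quad_S)
    finally show ?thesis unfolding G_def by (simp add: sum.distrib)
  qed
  have ImF: "\<exists>n::int. Im (cf_char M x S v) = 2 * pi * of_int n" if "v \<in> U" for v
  proof (rule exp_real_pos_Im)
    have "exp (cf_char M x S v) = \<phi> v * cnj (\<phi> v) * exp (complex_of_real (v \<bullet> (S *v v)))"
      unfolding cfeq using phi_nz[OF that] by (simp add: exp_add)
    also have "\<dots> = complex_of_real ((norm (\<phi> v))\<^sup>2) * complex_of_real (exp (v \<bullet> (S *v v)))"
      by (simp only: complex_norm_square[symmetric] exp_of_real)
    also have "\<dots> = complex_of_real ((norm (\<phi> v))\<^sup>2 * exp (v \<bullet> (S *v v)))"
      by (simp only: of_real_mult)
    finally show "exp (cf_char M x S v) = complex_of_real ((norm (\<phi> v))\<^sup>2 * exp (v \<bullet> (S *v v)))" .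
    show "(norm (\<phi> v))\<^sup>2 * exp (v \<bullet> (S *v v)) > 0" using phi_nz[OF that] by simp
  qed
  have ImDf: "Im (Df v $ j) = 0" if "v \<in> U" for v j
    using im_deriv_zero[OF U(1) that Df[OF that] ImF, of "axis j 1"] by (simp add: sum_axis_scaleR)
  have ImH: "Im (H $ i $ j) = 0" for i j
  proof -
    have "((\<lambda>v. Im (Df v $ j)) has_derivative (\<lambda>h. 0)) (at u)"
    proof (rule has_derivative_transform_within_open[OF has_derivative_const[of 0], of U])
      show "open U" "u \<in> U" by (fact U)+
      show "0 = Im (Df y $ j)" if "y \<in> U" for y using ImDf[OF that] by simp
    qed
    moreover have "((\<lambda>v. Im (Df v $ j)) has_derivative (\<lambda>h. Im (\<Sum>i\<in>UNIV. (h $ i) *\<^sub>R (H $ i $ j)))) (at u)"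
      by (rule has_derivative_Im[OF HD])
    ultimately have "(\<lambda>h. Im (\<Sum>i\<in>UNIV. (h $ i) *\<^sub>R (H $ i $ j))) = (\<lambda>h. 0)"
      by (rule has_derivative_unique[rotated])
    then have "Im (\<Sum>l\<in>UNIV. (axis i 1 $ l) *\<^sub>R (H $ l $ j)) = 0" by metis
    then show ?thesis by (simp add: sum_axis_scaleR)
  qed
  define Df' where "Df' v = (\<chi> j. Re (Df v $ j))" for v
  define H' where "H' = (\<chi> i j. Re (H $ i $ j))"
  have Df': "((\<lambda>v. Re (cf_char M x S v)) has_derivative (\<lambda>h. \<Sum>j\<in>UNIV. (h $ j) *\<^sub>R (Df' v $ j))) (at v)"
    if "v \<in> U" for v
    by (rule has_derivative_eq_rhs[OF has_derivative_Re[OF Df[OF that]]]) (simp add: Df'_def Re_sum)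
  have HD': "((\<lambda>v. Df' v $ j) has_derivative (\<lambda>h. \<Sum>i\<in>UNIV. (h $ i) *\<^sub>R (H' $ i $ j))) (at u)" for j
    unfolding Df'_def H'_def vec_lambda_beta
    by (rule has_derivative_eq_rhs[OF has_derivative_Re[OF HD]]) (simp add: Re_sum)
  have dG: "(G j has_real_derivative G1 j (wj B j v)) (at (wj B j v))"
    if "v \<in> U" "\<exists>i. B$i$j \<noteq> 0" for j v
    unfolding G_def G1_def using Dpos[OF that(1), of j] dC dSn
    by (auto intro!: derivative_eq_intros simp: field_simps power2_eq_square)
  have "\<exists>D. (\<exists>i. B$i$j \<noteq> 0) \<longrightarrow> (G1 j has_real_derivative D) (at (wj B j u))" for j
  proof -
    have "\<exists>D. (G1 j has_real_derivative D) (at (wj B j u))"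
      unfolding G1_def using Dpos[OF U(2), of j] dC dSn dC1 dSn1
      by (intro exI) (auto intro!: derivative_eq_intros simp: power2_eq_square)
    then show ?thesis by blast
  qed
  then obtain G2 where G2: "\<And>j. (\<exists>i. B$i$j \<noteq> 0) \<Longrightarrow> (G1 j has_real_derivative G2 j) (at (wj B j u))"
    by metis
  have H'eq: "H' = B ** diag_mat (\<chi> j. if (\<exists>i. B$i$j \<noteq> 0) then G2 j else 0) ** transpose B"
    by (rule hess_sep[OF U ReF dG G2 Df' HD'])
  have "H = (\<chi> i j. complex_of_real (H' $ i $ j))"
    unfolding H'_def vec_eq_iff using ImH by (simp add: complex_eq_iff)
  then show ?thesis unfolding H'eq by blast
qed

theorem theoremA1:
  fixes M :: "'a measure" and B Sig S :: "real^'k^'k" and z g x :: "'a \<Rightarrow> real^'k"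
    and a :: "real^'k"
  assumes "prob_space M"
    and "z \<in> borel_measurable M"
    and "prob_space.indep_vars M (\<lambda>_. borel) (\<lambda>j \<omega>. z \<omega> $ j) UNIV"
    and "\<forall>j. integrable M (\<lambda>\<omega>. (z \<omega> $ j)^2)"
    and "\<forall>j. (\<integral>\<omega>. z \<omega> $ j \<partial>M) = 0"
    and "\<forall>j. (\<integral>\<omega>. (z \<omega> $ j)^2 \<partial>M) = a $ j"
    and "gaussian_vec M g Sig"
    and "prob_space.indep_var M borel z borel g"
    and x_def: "x = (\<lambda>\<omega>. B *v z \<omega> + g \<omega>)"
    and S_def: "S = B ** diag_mat a ** transpose B + Sig"
  shows "(\<forall>u H. hessian_at (wd_char M x) (cf_char M x S) u H \<longrightarrow>
            (\<exists>d. H = (\<chi> i j. complex_of_real ((B ** diag_mat d ** transpose B) $ i $ j))))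
       \<and> (\<forall>u H. hessian_at (wd_cgf M x) (cf_cgf M x S) u H \<longrightarrow>
            (\<exists>d. H = B ** diag_mat d ** transpose B))"
proof -
  interpret prob_space M by (rule assms(1))
  show ?thesis
  proof (intro conjI allI impI)
    fix u H assume h: "hessian_at (wd_char M x) (cf_char M x S) u H"
    show "\<exists>d. H = (\<chi> i j. complex_of_real ((B ** diag_mat d ** transpose B) $ i $ j))"
      by (rule char_part[OF assms(2) assms(3) assms(4) assms(7) assms(8) x_def S_def h])
  next
    fix u H assume h: "hessian_at (wd_cgf M x) (cf_cgf M x S) u H"
    show "\<exists>d. H = B ** diag_mat d ** transpose B"
      by (rule cgf_part[OF assms(2) assms(3) assms(7) assms(8) x_def S_def h])
  qed
qed

end
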